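(* Consider the model below. A pair $(\mathbf A^\ddagger,\mathbf q^\ddagger)\in\mathcal A\times\mathbb R^n_{\ge0}$ maximizes aggregate profit $\Pi$ over $\mathcal A\times\mathbb R^n_{\ge 0}$ if and only if there is a pair $(\mathbf A^\dagger,\mathbf q^\dagger)$ maximizing total surplus $\Omega$ over $\mathcal A\times\mathbb R^n_{\ge0}$ with $\mathbf A^\ddagger=\mathbf A^\dagger$ and $\mathbf q^\ddagger=\mathbf q^\dagger/2$. Consequently, for such pairs, $\Omega(\mathbf A^\ddagger,\mathbf q^\ddagger)/\Omega(\mathbf A^\dagger,\mathbf q^\dagger)=3/4$.
   Context: Model: integers $n\ge2$ (firms) and $m\ge2$ (common characteristics); parameters $\alpha>0$, $\boldsymbol\beta\in\mathbb R^m$ with $\|\boldsymbol\beta\|_2=1$, and $\boldsymbol\gamma\in\mathbb R^n$ with $\gamma_i>0$ for all $i$. $\mathcal A$ is the set of real $m\times n$ matrices $\mathbf A=[\mathbf a_1,\dots,\mathbf a_n]$ with $\|\mathbf a_i\|_2=1$ for all $i$; an output profile is $\mathbf q\in\mathbb R^n_{\ge 0}$. With $\mathbf x=\mathbf A\mathbf q$, total surplus is $\Omega(\mathbf A,\mathbf q)=\alpha(\mathbf x^\top\boldsymbol\beta-\tfrac12\mathbf x^\top\mathbf x)+\mathbf q^\top\boldsymbol\gamma-\tfrac12\mathbf q^\top\mathbf q$ and aggregate profit is $\Pi(\mathbf A,\mathbf q)=\alpha(\mathbf x^\top\boldsymbol\beta-\mathbf x^\top\mathbf x)+\mathbf q^\top\boldsymbol\gamma-\mathbf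 q^\top\mathbf q$. *)

theory Defs
  imports "HOL-Analysis.Analysis"
begin

text \<open>Matrices A are m x n: type real^'n^'m (rows indexed by 'm, columns by 'n).
  Column i of A is the characteristic vector a_i of firm i.\<close>

definition char_set :: "(real^'n^'m) set" where
  "char_set = {A. \<forall>i. norm (column i A) = 1}"

definition nonneg_outputs :: "(real^'n) set" where
  "nonneg_outputs = {q. \<forall>i. 0 \<le> q $ i}"

definition total_surplus ::
  "real \<Rightarrow> real^'m \<Rightarrow> real^'n \<Rightarrow> real^'n^'m \<Rightarrow> real^'n \<Rightarrow> real" where
  "total_surplus \<alpha> \<beta> \<gamma> A q =
     (let x = A *v q in
        \<alpha> * (x \<bullet> \<beta> - (1/2) * (x \<bullet> x)) + q \<bullet> \<gamma> - (1/2) * (q \<bullet> q))"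

definition aggregate_profit ::
  "real \<Rightarrow> real^'m \<Rightarrow> real^'n \<Rightarrow> real^'n^'m \<Rightarrow> real^'n \<Rightarrow> real" where
  "aggregate_profit \<alpha> \<beta> \<gamma> A q =
     (let x = A *v q in
        \<alpha> * (x \<bullet> \<beta> - x \<bullet> x) + q \<bullet> \<gamma> - q \<bullet> q)"

definition is_maximizer ::
  "(real^'n^'m \<Rightarrow> real^'n \<Rightarrow> real) \<Rightarrow> real^'n^'m \<Rightarrow> real^'n \<Rightarrow> bool" where
  "is_maximizer f A q \<longleftrightarrow>
     A \<in> char_set \<and> q \<in> nonneg_outputs \<and>
     (\<forall>A' \<in> char_set. \<forall>q' \<in> nonneg_outputs. f A' q' \<le> f A q)"

end

theory Submission
  imports Defs
begin

lemma ts_scale: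
  "total_surplus \<alpha> \<beta> \<gamma> A (t *\<^sub>R q) =
     t * (\<alpha> * ((A *v q) \<bullet> \<beta>) + q \<bullet> \<gamma>) - t^2/2 * (\<alpha> * ((A *v q) \<bullet> (A *v q)) + q \<bullet> q)"
  unfolding total_surplus_def Let_def matrix_vector_mult_scaleR
  by (simp add: algebra_simps power2_eq_square)

lemma ap_ts:
  "aggregate_profit \<alpha> \<beta> \<gamma> A q = total_surplus \<alpha> \<beta> \<gamma> A (2 *\<^sub>R q) / 2"
  unfolding ts_scale unfolding aggregate_profit_def Let_def
  by (simp add: algebra_simps power2_eq_square)

lemma nonneg_scale: "q \<in> nonneg_outputs \<Longrightarrow> (t::real) \<ge> 0 \<Longrightarrow> t *\<^sub>R q \<in> nonneg_outputs"
  unfolding nonneg_outputs_def by simp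

lemma ap_ts': "aggregate_profit \<alpha> \<beta> \<gamma> A ((1/2) *\<^sub>R q) = total_surplus \<alpha> \<beta> \<gamma> A q / 2"
  by (simp add: ap_ts)

lemma crit:
  fixes L Q :: real
  assumes Q: "Q \<ge> 0" and h: "\<And>t. t \<ge> 0 \<Longrightarrow> t * L - t^2/2 * Q \<le> L - Q/2"
  shows "L = Q"
proof (rule ccontr)
  assume "L \<noteq> Q"
  then consider "L > Q" | "L < Q" by linarith
  then show False
  proof cases
    case 1
    define d where "d = (L-Q)/(Q+1)"
    have d: "d > 0" "d * (Q+1) = L - Q" using 1 Q by (auto simp: d_def field_simps)
    have "(1+d) * L - (1+d)^2/2 * Q \<le> L - Q/2" using h[of "1+d"] d by simp
    moreover have "(1+d) * L - (1+d)^2/2 * Q = L - Q/2 + d * ((L - Q) - d/2*Q)"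
      by (simp add: algebra_simps power2_eq_square)
    ultimately have "d * ((L - Q) - d/2*Q) \<le> 0" by linarith
    hence f1: "(L - Q) - d/2*Q \<le> 0" using d(1) by (simp add: mult_le_0_iff)
    have f2: "d*Q + d = L - Q" using d(2) by (simp add: distrib_left)
    have f3: "d*Q \<ge> 0" using d Q by simp
    have f4: "d/2*Q = (d*Q)/2" by simp
    show False using f1 f2 f3 f4 d(1) by linarith
  next
    case 2
    define D where "D = Q - L"
    define d where "d = D/(Q+D)"
    have D: "D > 0" using 2 D_def by simp
    have d: "d > 0" "d \<le> 1" "d * (Q+D) = D" using D Q by (auto simp: d_def field_simps)
    have "(1-d) * L - (1-d)^2/2 * Q \<le> L - Q/2" using h[of "1-d"] d by simp
    moreover have "(1-d) * L - (1-d)^2/2 * Q = L - Q/2 + d * (D - d/2*Q)"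
      unfolding D_def by (simp add: field_simps power2_eq_square)
    ultimately have "d * (D - d/2*Q) \<le> 0" by linarith
    hence f1: "D - d/2*Q \<le> 0" using d(1) by (simp add: mult_le_0_iff)
    have f2: "d*Q + d*D = D" using d(3) by (simp add: distrib_left)
    have f3: "d*Q \<ge> 0" "d*D > 0" using d Q D by simp_all
    have f4: "d/2*Q = (d*Q)/2" by simp
    show False using f1 f2 f3 f4 by linarith
  qed
qed

lemma aux: "(a::real) \<noteq> 0 \<Longrightarrow> (c/a)*c - (c/a)^2/2*a = c^2/(2*a)"
  by (simp add: field_simps power2_eq_square)

theorem proposition1:
  fixes \<alpha> :: real and \<beta> :: "real^'m" and \<gamma> :: "real^'n"
  assumes "CARD('n) \<ge> 2" and "CARD('m) \<ge> 2"
    and "\<alpha> > 0" and "norm \<beta> = 1" and "\<forall>i. \<gamma> $ i > 0"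
  shows "(\<forall>(A2::real^'n^'m) q2. A2 \<in> char_set \<and> q2 \<in> nonneg_outputs \<longrightarrow>
            (is_maximizer (aggregate_profit \<alpha> \<beta> \<gamma>) A2 q2 \<longleftrightarrow>
             (\<exists>A1 q1. is_maximizer (total_surplus \<alpha> \<beta> \<gamma>) A1 q1 \<and>
                      A2 = A1 \<and> q2 = (1/2) *\<^sub>R q1)))
       \<and> (\<forall>(A1::real^'n^'m) q1 A2 q2.
            is_maximizer (aggregate_profit \<alpha> \<beta> \<gamma>) A2 q2 \<and>
            is_maximizer (total_surplus \<alpha> \<beta> \<gamma>) A1 q1 \<and>
            A2 = A1 \<and> q2 = (1/2) *\<^sub>R q1 \<longrightarrow>
            total_surplus \<alpha> \<beta> \<gamma> A2 q2 / total_surplus \<alpha> \<beta> \<gamma> A1 q1 = 3/4)"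
proof (intro conjI allI impI)
  fix A2 :: "real^'n^'m" and q2 :: "real^'n"
  assume in2: "A2 \<in> char_set \<and> q2 \<in> nonneg_outputs"
  show "is_maximizer (aggregate_profit \<alpha> \<beta> \<gamma>) A2 q2 \<longleftrightarrow>
             (\<exists>A1 q1. is_maximizer (total_surplus \<alpha> \<beta> \<gamma>) A1 q1 \<and>
                      A2 = A1 \<and> q2 = (1/2) *\<^sub>R q1)"
  proof
    assume m: "is_maximizer (aggregate_profit \<alpha> \<beta> \<gamma>) A2 q2"
    have "is_maximizer (total_surplus \<alpha> \<beta> \<gamma>) A2 (2 *\<^sub>R q2)"
      unfolding is_maximizer_def
    proof (intro conjI ballI)
      show "A2 \<in> char_set" using in2 by simp
      show "2 *\<^sub>R q2 \<in> nonneg_outputs" using in2 nonneg_scale[of q2 2] by simp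
      fix A' :: "real^'n^'m" and q' :: "real^'n" assume a: "A' \<in> char_set" "q' \<in> nonneg_outputs"
      have "aggregate_profit \<alpha> \<beta> \<gamma> A' ((1/2) *\<^sub>R q') \<le> aggregate_profit \<alpha> \<beta> \<gamma> A2 q2"
        using m a nonneg_scale[of q' "1/2"] unfolding is_maximizer_def by auto
      then show "total_surplus \<alpha> \<beta> \<gamma> A' q' \<le> total_surplus \<alpha> \<beta> \<gamma> A2 (2 *\<^sub>R q2)"
        by (simp add: ap_ts' ap_ts)
    qed
    then show "\<exists>A1 q1. is_maximizer (total_surplus \<alpha> \<beta> \<gamma>) A1 q1 \<and>
                      A2 = A1 \<and> q2 = (1/2) *\<^sub>R q1" by force
  next
    assume "\<exists>A1 q1. is_maximizer (total_surplus \<alpha> \<beta> \<gamma>) A1 q1 \<and>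
                      A2 = A1 \<and> q2 = (1/2) *\<^sub>R q1"
    then obtain q1 where m: "is_maximizer (total_surplus \<alpha> \<beta> \<gamma>) A2 q1" and q: "q2 = (1/2) *\<^sub>R q1"
      by blast
    show "is_maximizer (aggregate_profit \<alpha> \<beta> \<gamma>) A2 q2"
      unfolding is_maximizer_def
    proof (intro conjI ballI)
      show "A2 \<in> char_set" "q2 \<in> nonneg_outputs" using in2 by simp_all
      fix A' :: "real^'n^'m" and q' :: "real^'n" assume a: "A' \<in> char_set" "q' \<in> nonneg_outputs"
      have "total_surplus \<alpha> \<beta> \<gamma> A' (2 *\<^sub>R q') \<le> total_surplus \<alpha> \<beta> \<gamma> A2 q1"
        using m a nonneg_scale[of q' 2] unfolding is_maximizer_def by auto
      then show "aggregate_profit \<alpha> \<beta> \<gamma> A' q' \<le> aggregate_profit \<alpha> \<beta> \<gamma> A2 q2"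
        unfolding q ap_ts' by (simp add: ap_ts)
    qed
  qed
next
  fix A1 :: "real^'n^'m" and q1 :: "real^'n" and A2 :: "real^'n^'m" and q2 :: "real^'n"
  assume "is_maximizer (aggregate_profit \<alpha> \<beta> \<gamma>) A2 q2 \<and>
            is_maximizer (total_surplus \<alpha> \<beta> \<gamma>) A1 q1 \<and>
            A2 = A1 \<and> q2 = (1/2) *\<^sub>R q1"
  hence m: "is_maximizer (total_surplus \<alpha> \<beta> \<gamma>) A1 q1" and e: "A2 = A1" "q2 = (1/2) *\<^sub>R q1"
    by auto
  define L where "L = \<alpha> * ((A1 *v q1) \<bullet> \<beta>) + q1 \<bullet> \<gamma>"
  define Q where "Q = \<alpha> * ((A1 *v q1) \<bullet> (A1 *v q1)) + q1 \<bullet> q1"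
  have ts: "\<And>t. total_surplus \<alpha> \<beta> \<gamma> A1 (t *\<^sub>R q1) = t * L - t^2/2 * Q"
    unfolding L_def Q_def ts_scale ..
  have Q0: "Q \<ge> 0" unfolding Q_def using assms(3) by simp
  have LQ: "L = Q"
  proof (rule crit[OF Q0])
    fix t :: real assume "t \<ge> 0"
    hence "total_surplus \<alpha> \<beta> \<gamma> A1 (t *\<^sub>R q1) \<le> total_surplus \<alpha> \<beta> \<gamma> A1 q1"
      using m nonneg_scale[of q1 t] unfolding is_maximizer_def by auto
    then show "t * L - t^2/2 * Q \<le> L - Q/2" using ts[of t] ts[of 1] by simp
  qed
  define i :: 'n where "i = undefined"
  define A' :: "real^'n^'m" where "A' = (\<chi> r c. \<beta> $ r)"
  define s where "s = (\<alpha> + \<gamma> $ i) / (\<alpha> + 1)"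
  define q' :: "real^'n" where "q' = s *\<^sub>R axis i 1"
  have s0: "s > 0" unfolding s_def using assms(3) assms(5)[rule_format, of i]
    by (intro divide_pos_pos; linarith)
  have colA: "column c A' = \<beta>" for c unfolding A'_def column_def by (simp add: vec_eq_iff)
  have A'c: "A' \<in> char_set" unfolding char_set_def using colA assms(4) by simp
  have q'c: "q' \<in> nonneg_outputs" unfolding q'_def nonneg_outputs_def using s0
    by (simp add: axis_def)
  have Av: "A' *v q' = s *\<^sub>R \<beta>"
    unfolding q'_def matrix_vector_mult_scaleR
    by (simp add: vec_eq_iff matrix_vector_mult_def A'_def axis_def if_distrib cong: if_cong)
  have bb: "\<beta> \<bullet> \<beta> = 1" using assms(4) by (simp add: norm_eq_sqrt_inner)
  have qq: "q' \<bullet> q' = s^2" "q' \<bullet> \<gamma> = s * \<gamma> $ i"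
    unfolding q'_def by (simp_all add: inner_axis inner_axis' power2_eq_square)
  have "total_surplus \<alpha> \<beta> \<gamma> A' q' = s * (\<alpha> + \<gamma> $ i) - s^2/2 * (\<alpha> + 1)"
    unfolding total_surplus_def Let_def Av qq using bb
    by (simp add: algebra_simps power2_eq_square)
  also have "\<dots> = (\<alpha> + \<gamma> $ i)^2 / (2*(\<alpha>+1))"
  proof -
    have p: "\<alpha> + 1 \<noteq> 0" using assms(3) by simp
    show ?thesis unfolding s_def using aux[OF p, of "\<alpha> + \<gamma> $ i"] by (simp add: add.commute)
  qed
  also have "\<dots> > 0" using assms(3,5) by (smt (verit) divide_pos_pos zero_less_power)
  finally have pos: "total_surplus \<alpha> \<beta> \<gamma> A' q' > 0" .
  have "total_surplus \<alpha> \<beta> \<gamma> A' q' \<le> total_surplus \<alpha> \<beta> \<gamma> A1 q1"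
    using m A'c q'c unfolding is_maximizer_def by auto
  hence "total_surplus \<alpha> \<beta> \<gamma> A1 q1 > 0" using pos by simp
  hence T1: "total_surplus \<alpha> \<beta> \<gamma> A1 q1 = L/2" and Lp: "L > 0" using ts[of 1] LQ by auto
  have T2: "total_surplus \<alpha> \<beta> \<gamma> A2 q2 = 3*L/8"
    unfolding e ts LQ by (simp add: power2_eq_square)
  show "total_surplus \<alpha> \<beta> \<gamma> A2 q2 / total_surplus \<alpha> \<beta> \<gamma> A1 q1 = 3/4"
    unfolding T1 T2 using Lp by simp
qed

end
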